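(* Let $Q$ be a non-degenerate quadratic form on a finite-dimensional real vector space $V$ with associated bilinear form $Q(\cdot,\cdot)$, let $E\subset V$ be a subspace, $E^Q=\{v: Q(v,e)=0\ \forall e\in E\}$ and $E_0:=E\cap E^Q$. Let $T:E\to V/E$ be linear. Then $Q(Tx,x)=0$ for all $x\in E_0$ (this is well-defined since $x\in E^Q$) if and only if there exists a linear map $T':V\to V$ lifting $T$ (i.e. $T'(e)+E=T(e)$ for all $e\in E$) with $Q(T'x,x)=0$ for all $x\in V$, i.e. $T'\in\mathfrak{so}(Q)$. *)

theory Defs
  imports "HOL-Analysis.Analysis"
begin

text \<open>A quadratic form Q on the finite-dimensional real vector space V (a type of class
euclidean_space) is given through its associated symmetric bilinear form B, Q v = B v v.\<close>

definition sym_bilinear_form :: "('a::real_vector \<Rightarrow> 'a \<Rightarrow> real) \<Rightarrow> bool" where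
  "sym_bilinear_form B \<longleftrightarrow> bilinear B \<and> (\<forall>u v. B u v = B v u)"

definition nondegenerate_form :: "('a::real_vector \<Rightarrow> 'a \<Rightarrow> real) \<Rightarrow> bool" where
  "nondegenerate_form B \<longleftrightarrow> (\<forall>v. (\<forall>w. B v w = 0) \<longrightarrow> v = 0)"

definition q_orth :: "('a \<Rightarrow> 'a \<Rightarrow> real) \<Rightarrow> 'a set \<Rightarrow> 'a set" where
  "q_orth B E = {v. \<forall>e\<in>E. B v e = 0}"

text \<open>A linear map T : E \<rightarrow> V/E, represented by a choice of representatives
t : V \<Rightarrow> V (only values on E matter, taken modulo E): t is linear modulo E on E.\<close>
definition quot_linear_on :: "'a::real_vector set \<Rightarrow> ('a \<Rightarrow> 'a) \<Rightarrow> bool" where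
  "quot_linear_on E t \<longleftrightarrow>
     (\<forall>x\<in>E. \<forall>y\<in>E. \<forall>a b. t (a *\<^sub>R x + b *\<^sub>R y) - (a *\<^sub>R t x + b *\<^sub>R t y) \<in> E)"

end

theory Submission
  imports Defs
begin

definition Amap :: "('a::euclidean_space \<Rightarrow> 'a \<Rightarrow> real) \<Rightarrow> 'a \<Rightarrow> 'a" where
  "Amap B v = (\<Sum>b\<in>Basis. B v b *\<^sub>R b)"

lemma Amap_repr:
  fixes B :: "'a::euclidean_space \<Rightarrow> 'a \<Rightarrow> real"
  assumes "bilinear B"
  shows "B v y = Amap B v \<bullet> y"
proof -
  have lin: "linear (B v)" using assms by (simp add: bilinear_def)
  have "B v y = B v (\<Sum>b\<in>Basis. (y \<bullet> b) *\<^sub>R b)" by (simp add: euclidean_representation)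
  also have "\<dots> = (\<Sum>b\<in>Basis. (y \<bullet> b) * B v b)"
    by (simp add: linear_sum[OF lin] linear_scale[OF lin])
  also have "\<dots> = Amap B v \<bullet> y"
    unfolding Amap_def inner_sum_left by (rule sum.cong) (simp_all add: inner_commute mult.commute)
  finally show ?thesis .
qed

lemma Amap_linear:
  fixes B :: "'a::euclidean_space \<Rightarrow> 'a \<Rightarrow> real"
  assumes "bilinear B"
  shows "linear (Amap B)"
proof (rule linearI)
  fix x y show "Amap B (x + y) = Amap B x + Amap B y"
    using assms by (simp add: Amap_def bilinear_ladd scaleR_add_left sum.distrib)
next
  fix c x show "Amap B (c *\<^sub>R x) = c *\<^sub>R Amap B x"
    using assms by (simp add: Amap_def bilinear_lmul scaleR_sum_right)
qed

lemma Amap_inj: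
  fixes B :: "'a::euclidean_space \<Rightarrow> 'a \<Rightarrow> real"
  assumes "sym_bilinear_form B" "nondegenerate_form B"
  shows "inj (Amap B)"
proof (rule injI)
  fix x y assume eq: "Amap B x = Amap B y"
  have bl: "bilinear B" using assms(1) by (simp add: sym_bilinear_form_def)
  have "Amap B (x - y) = 0" by (simp add: linear_diff[OF Amap_linear[OF bl]] eq)
  then have "\<forall>w. B (x - y) w = 0"
    by (simp add: bilinear_lsub[OF bl] Amap_repr[OF bl] inner_diff_left)
  then have "x - y = 0" using assms(2) unfolding nondegenerate_form_def by blast
  then show "x = y" by simp
qed

lemma repr_exists:
  fixes B w :: "'a::euclidean_space \<Rightarrow> 'a \<Rightarrow> real"
  assumes "sym_bilinear_form B" "nondegenerate_form B" "bilinear w"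
  shows "\<exists>T. linear T \<and> (\<forall>x y. B (T x) y = w x y)"
proof -
  have bl: "bilinear B" using assms(1) by (simp add: sym_bilinear_form_def)
  have "surj (Amap B)"
    using eucl.linear_injective_imp_surjective[OF Amap_linear[OF bl] Amap_inj[OF assms(1,2)]] by simp
  then obtain g where g: "linear g" "Amap B \<circ> g = id"
    using real_vector.linear_surjective_right_inverse[OF Amap_linear[OF bl]] by blast
  have "linear (g \<circ> Amap w)" using g(1) Amap_linear[OF assms(3)] by (rule linear_compose[rotated])
  moreover have "B ((g \<circ> Amap w) x) y = w x y" for x y
  proof -
    have "Amap B (g (Amap w x)) = Amap w x" using g(2) by (metis comp_apply id_apply)
    then show ?thesis by (simp add: Amap_repr[OF bl] Amap_repr[OF assms(3)])
  qed
  ultimately show ?thesis by blast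
qed

lemma double_orth:
  fixes B :: "'a::euclidean_space \<Rightarrow> 'a \<Rightarrow> real"
  assumes "sym_bilinear_form B" "nondegenerate_form B" "subspace E"
    and z: "\<forall>y\<in>q_orth B E. B z y = 0"
  shows "z \<in> E"
proof -
  have bl: "bilinear B" and sy: "\<And>u v. B u v = B v u"
    using assms(1) by (auto simp add: sym_bilinear_form_def)
  let ?A = "Amap B"
  have qo: "q_orth B E = (?A ` E)\<^sup>\<bottom>"
    by (auto simp: q_orth_def orthogonal_comp_def orthogonal_def Amap_repr[OF bl, symmetric]
        intro: sy[THEN trans])
  have "?A z \<in> (?A ` E)\<^sup>\<bottom>\<^sup>\<bottom>"
    using z unfolding qo
    by (auto simp: orthogonal_comp_def orthogonal_def Amap_repr[OF bl] inner_commute)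
  also have "\<dots> = ?A ` E"
    by (rule orthogonal_comp_self[OF linear_subspace_image[OF Amap_linear[OF bl] assms(3)]])
  finally obtain e where "e \<in> E" "?A z = ?A e" by blast
  then show ?thesis using Amap_inj[OF assms(1,2)] by (metis injD)
qed


lemma lift_linear:
  assumes "subspace E" "quot_linear_on E t"
  shows "\<exists>L. linear L \<and> (\<forall>e\<in>E. L e - t e \<in> E)"
proof -
  obtain BE where BE: "BE \<subseteq> E" "independent BE" "E \<subseteq> span BE" "card BE = dim E"
    by (rule basis_exists)
  obtain L where L: "linear L" "\<forall>x\<in>BE. L x = t x"
    using real_vector.linear_independent_extend[OF BE(2), of t] by blast
  have ql: "\<And>x y a b. x \<in> E \<Longrightarrow> y \<in> E \<Longrightarrow> t (a *\<^sub>R x + b *\<^sub>R y) - (a *\<^sub>R t x + b *\<^sub>R t y) \<in> E"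
    using assms(2) by (simp add: quot_linear_on_def)
  have "L e - t e \<in> E \<and> e \<in> E" if "e \<in> span BE" for e
    using that
  proof (induction rule: span_induct_alt)
    case base
    have "t 0 \<in> E" using ql[of 0 0 0 0] assms(1) by (simp add: subspace_0)
    then show ?case using assms(1) L(1) by (simp add: linear_0 subspace_0 subspace_neg)
  next
    case (step c x y)
    have xE: "x \<in> E" using step(1) BE(1) by blast
    have yE: "y \<in> E" using step(2) by blast
    have d: "t (c *\<^sub>R x + 1 *\<^sub>R y) - (c *\<^sub>R t x + 1 *\<^sub>R t y) \<in> E"
      by (rule ql[OF xE yE])
    have Lx: "L x = t x" using L(2) step(1) by blast
    have "L (c *\<^sub>R x + y) - t (c *\<^sub>R x + y) = (L y - t y) - (t (c *\<^sub>R x + 1 *\<^sub>R y) - (c *\<^sub>R t x + 1 *\<^sub>R t y))"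
      by (simp add: linear_add[OF L(1)] linear_scale[OF L(1)] Lx)
    also have "\<dots> \<in> E" using d step(2) assms(1) by (metis subspace_diff)
    finally have m: "L (c *\<^sub>R x + y) - t (c *\<^sub>R x + y) \<in> E" .
    have "c *\<^sub>R x + y \<in> E" using xE yE assms(1) by (metis subspace_add subspace_scale)
    then show ?case using m by blast
  qed
  then show ?thesis using L(1) BE(3) by blast
qed


lemma decomp:
  fixes E F :: "'a::euclidean_space set"
  assumes sE: "subspace E" and sF: "subspace F"
  shows "\<exists>p0 p1 q1. linear p0 \<and> linear p1 \<and> linear q1 \<and> (\<forall>x. p0 x \<in> E \<inter> F) \<and>
     (\<forall>e\<in>E. p1 e = e - p0 e \<and> q1 e = 0) \<and> (\<forall>y\<in>F. q1 y = y - p0 y \<and> p1 y = 0)"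
proof -
  have sEF: "subspace (E \<inter> F)" using sE sF by (rule subspace_inter)
  obtain b0 where b0: "b0 \<subseteq> E \<inter> F" "independent b0" "E \<inter> F \<subseteq> span b0" "card b0 = dim (E \<inter> F)"
    by (rule basis_exists)
  obtain BE where BE: "b0 \<subseteq> BE" "BE \<subseteq> E" "independent BE" "E \<subseteq> span BE"
    using maximal_independent_subset_extend[of b0 E] b0 by blast
  obtain BF where BF: "b0 \<subseteq> BF" "BF \<subseteq> F" "independent BF" "F \<subseteq> span BF"
    using maximal_independent_subset_extend[of b0 F] b0 by blast
  have spE: "span BE \<subseteq> E" using BE(2) sE by (rule span_minimal)
  have spF: "span BF \<subseteq> F" using BF(2) sF by (rule span_minimal)
  have inter: "BE \<inter> BF \<subseteq> b0"
  proof
    fix b assume b: "b \<in> BE \<inter> BF"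
    show "b \<in> b0"
    proof (rule ccontr)
      assume nb: "b \<notin> b0"
      have "b \<in> span b0" using b BE(2) BF(2) b0(3) by blast
      moreover have "b0 \<subseteq> BE - {b}" using nb BE(1) by blast
      ultimately have "b \<in> span (BE - {b})" using span_mono by blast
      then show False using BE(3) b by (auto simp: dependent_def)
    qed
  qed
  have finF: "finite BF" using BF(3) by (rule finiteI_independent)
  have indU: "independent (BE \<union> C)" if "C \<subseteq> BF - b0" for C
  proof -
    have "finite C" using that finF by (meson finite_Diff finite_subset)
    then show ?thesis using that
    proof (induction C rule: finite_induct)
      case empty then show ?case using BE by simp
    next
      case (insert a C)
      have aBF: "a \<in> BF" "a \<notin> b0" using insert by auto
      have CBF: "C \<subseteq> BF - b0" using insert by auto
      have ind: "independent (BE \<union> C)" using insert CBF by blast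
      have "a \<notin> span (BE \<union> C)"
      proof
        assume "a \<in> span (BE \<union> C)"
        then obtain u v where uv: "a = u + v" "u \<in> span BE" "v \<in> span C" by (auto simp: span_Un)
        have uE: "u \<in> E" using uv spE by blast
        have "v \<in> span BF" using uv(3) CBF span_mono[of C BF] by blast
        then have "a - v \<in> span BF" using aBF by (simp add: span_base span_diff)
        then have "u \<in> F" using uv spF by (metis add_diff_cancel_right' subsetD)
        then have "u \<in> span b0" using uE b0(3) by blast
        then have "u \<in> span (b0 \<union> C)" "v \<in> span (b0 \<union> C)"
          using uv(3) span_mono[of b0 "b0 \<union> C"] span_mono[of C "b0 \<union> C"] by blast+
        then have "a \<in> span (b0 \<union> C)" using uv(1) span_add by metis
        moreover have "b0 \<union> C \<subseteq> BF - {a}" using BF(1) CBF insert.hyps(2) aBF by auto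
        ultimately have "a \<in> span (BF - {a})" using span_mono by blast
        then show False using BF(3) aBF by (auto simp: dependent_def)
      qed
      then show ?case using ind by (simp add: independent_insert)
    qed
  qed
  have SU: "BE \<union> BF = BE \<union> (BF - b0)" using BE(1) by blast
  have indS: "independent (BE \<union> BF)" unfolding SU by (rule indU) simp
  let ?S = "BE \<union> BF"
  obtain p0 where p0: "linear p0" "\<forall>x\<in>?S. p0 x = (if x \<in> b0 then x else 0)"
      "range p0 = span ((\<lambda>x. if x \<in> b0 then x else 0) ` ?S)"
    using real_vector.linear_independent_extend_subspace[OF indS, of "\<lambda>x. if x \<in> b0 then x else 0"] by blast
  obtain p1 where p1: "linear p1" "\<forall>x\<in>?S. p1 x = (if x \<in> BE - b0 then x else 0)"
    using real_vector.linear_independent_extend[OF indS, of "\<lambda>x. if x \<in> BE - b0 then x else 0"] by blast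
  obtain q1 where q1: "linear q1" "\<forall>x\<in>?S. q1 x = (if x \<in> BF - b0 then x else 0)"
    using real_vector.linear_independent_extend[OF indS, of "\<lambda>x. if x \<in> BF - b0 then x else 0"] by blast
  have r0: "p0 x \<in> E \<inter> F" for x
  proof -
    have "(\<lambda>x. if x \<in> b0 then x else 0) ` ?S \<subseteq> E \<inter> F"
      using b0(1) sE sF by (auto simp: subspace_0)
    then have "span ((\<lambda>x. if x \<in> b0 then x else 0) ` ?S) \<subseteq> E \<inter> F"
      using sEF by (rule span_minimal)
    then show ?thesis using p0(3) by blast
  qed
  have sub: "subspace {x. p1 x = x - p0 x \<and> q1 x = 0}"
    unfolding subspace_def using p0(1) p1(1) q1(1)
    by (simp add: linear_add linear_scale linear_0 algebra_simps; (metis scaleR_add_right)?)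
  have sub2: "subspace {x. q1 x = x - p0 x \<and> p1 x = 0}"
    unfolding subspace_def using p0(1) p1(1) q1(1)
    by (simp add: linear_add linear_scale linear_0 algebra_simps; (metis scaleR_add_right)?)
  have A: "p1 e = e - p0 e \<and> q1 e = 0" if "e \<in> E" for e
  proof -
    have "e \<in> span BE" using that BE(4) by blast
    then show ?thesis
    proof (rule span_induct[where P="\<lambda>x. p1 x = x - p0 x \<and> q1 x = 0"])
      show "subspace (Collect (\<lambda>x. p1 x = x - p0 x \<and> q1 x = 0))" using sub by simp
    next
      fix x assume "x \<in> BE"
      then show "p1 x = x - p0 x \<and> q1 x = 0" using p0(2) p1(2) q1(2) inter BE(1) by auto
    qed
  qed
  have Bq: "q1 y = y - p0 y \<and> p1 y = 0" if "y \<in> F" for y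
  proof -
    have "y \<in> span BF" using that BF(4) by blast
    then show ?thesis
    proof (rule span_induct[where P="\<lambda>x. q1 x = x - p0 x \<and> p1 x = 0"])
      show "subspace (Collect (\<lambda>x. q1 x = x - p0 x \<and> p1 x = 0))" using sub2 by simp
    next
      fix x assume "x \<in> BF"
      then show "q1 x = x - p0 x \<and> p1 x = 0" using p0(2) p1(2) q1(2) inter BF(1) by auto
    qed
  qed
  show ?thesis using p0(1) p1(1) q1(1) r0 A Bq by blast
qed

theorem mainTheorem10:
  fixes B :: "'a::euclidean_space \<Rightarrow> 'a \<Rightarrow> real"
    and E :: "'a set"
    and t :: "'a \<Rightarrow> 'a"
  assumes "sym_bilinear_form B"
    and "nondegenerate_form B"
    and "subspace E"
    and "quot_linear_on E t"
  shows "(\<forall>x \<in> E \<inter> q_orth B E. B (t x) x = 0) \<longleftrightarrow>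
         (\<exists>T'. linear T' \<and> (\<forall>e\<in>E. T' e - t e \<in> E) \<and> (\<forall>x. B (T' x) x = 0))"
proof -
  have bl: "bilinear B" and sy: "\<And>u v. B u v = B v u"
    using assms(1) by (auto simp add: sym_bilinear_form_def)
  let ?F = "q_orth B E"
  have sF: "subspace ?F"
    unfolding subspace_def q_orth_def
    by (simp add: bilinear_ladd[OF bl] bilinear_lmul[OF bl] bilinear_lzero[OF bl])
  show ?thesis
  proof
    assume H: "\<forall>x \<in> E \<inter> q_orth B E. B (t x) x = 0"
    obtain L where L: "linear L" "\<forall>e\<in>E. L e - t e \<in> E"
      using lift_linear[OF assms(3,4)] by blast
    have hL0: "B (L x) x = 0" if "x \<in> E \<inter> ?F" for x
    proof -
      have "B x (L x - t x) = 0" using that L(2) by (auto simp: q_orth_def)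
      then have "B (L x - t x) x = 0" by (simp add: sy)
      then show ?thesis using H that by (simp add: bilinear_lsub[OF bl])
    qed
    have anti: "B (L u) v = - B (L v) u" if "u \<in> E \<inter> ?F" "v \<in> E \<inter> ?F" for u v
    proof -
      have "u + v \<in> E \<inter> ?F" using that assms(3) sF by (simp add: subspace_add)
      then have "B (L (u + v)) (u + v) = 0" by (rule hL0)
      then show ?thesis using hL0[OF that(1)] hL0[OF that(2)]
        by (simp add: linear_add[OF L(1)] bilinear_ladd[OF bl] bilinear_radd[OF bl])
    qed
    obtain p0 p1 q1 where pq: "linear p0" "linear p1" "linear q1" "\<forall>x. p0 x \<in> E \<inter> ?F"
      "\<forall>e\<in>E. p1 e = e - p0 e \<and> q1 e = 0" "\<forall>y\<in>?F. q1 y = y - p0 y \<and> p1 y = 0"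
      using decomp[OF assms(3) sF] by blast
    define m where "m x y = B (L (p0 x)) ((1/2) *\<^sub>R p0 y + q1 y) + B (L (p1 x)) (p0 y + q1 y)" for x y
    define w where "w x y = m x y - m y x" for x y
    have bm: "bilinear m"
      unfolding bilinear_def m_def
      using pq(1-3) L(1)
      by (auto intro!: linearI simp: linear_add linear_scale bilinear_ladd[OF bl] bilinear_radd[OF bl]
          bilinear_lmul[OF bl] bilinear_rmul[OF bl] algebra_simps)
    have bw: "bilinear w"
      unfolding bilinear_def w_def
      by (auto intro!: linearI simp: bilinear_ladd[OF bm] bilinear_radd[OF bm]
          bilinear_lmul[OF bm] bilinear_rmul[OF bm] algebra_simps)
    obtain T' where T': "linear T'" "\<And>x y. B (T' x) y = w x y"
      using repr_exists[OF assms(1,2) bw] by blast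
    have skew: "B (T' x) x = 0" for x using T'(2) by (simp add: w_def)
    have lift: "T' e - t e \<in> E" if eE: "e \<in> E" for e
    proof -
      have "B (T' e - L e) y = 0" if yF: "y \<in> ?F" for y
      proof -
        have e1: "p1 e = e - p0 e" "q1 e = 0" using pq(5) eE by auto
        have y1: "q1 y = y - p0 y" "p1 y = 0" using pq(6) yF by auto
        have an: "B (L (p0 y)) (p0 e) = - B (L (p0 e)) (p0 y)"
          using anti pq(4) by blast
        have "w e y = B (L (p0 e)) ((1/2) *\<^sub>R p0 y + (y - p0 y)) + B (L (e - p0 e)) y
            - B (L (p0 y)) ((1/2) *\<^sub>R p0 e)"
          unfolding w_def m_def e1 y1
          by (simp add: linear_0[OF L(1)] bilinear_lzero[OF bl] bilinear_rzero[OF bl])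
        also have "\<dots> = B (L (p0 e)) y + B (L (e - p0 e)) y"
          by (simp add: bilinear_radd[OF bl] bilinear_rsub[OF bl] bilinear_rmul[OF bl] an algebra_simps)
        also have "\<dots> = B (L e) y"
          by (simp add: linear_diff[OF L(1)] bilinear_lsub[OF bl])
        finally show ?thesis using T'(2) by (simp add: bilinear_lsub[OF bl])
      qed
      then have "T' e - L e \<in> E" using double_orth[OF assms(1,2,3)] by blast
      then have "(T' e - L e) + (L e - t e) \<in> E" using L(2) eE assms(3) by (metis subspace_add)
      then show ?thesis by simp
    qed
    show "\<exists>T'. linear T' \<and> (\<forall>e\<in>E. T' e - t e \<in> E) \<and> (\<forall>x. B (T' x) x = 0)"
      using T'(1) lift skew by blast
  next
    assume "\<exists>T'. linear T' \<and> (\<forall>e\<in>E. T' e - t e \<in> E) \<and> (\<forall>x. B (T' x) x = 0)"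
    then obtain T' where T': "linear T'" "\<forall>e\<in>E. T' e - t e \<in> E" "\<forall>x. B (T' x) x = 0" by blast
    show "\<forall>x \<in> E \<inter> q_orth B E. B (t x) x = 0"
    proof
      fix x assume x: "x \<in> E \<inter> q_orth B E"
      have "B x (T' x - t x) = 0" using x T'(2) by (auto simp: q_orth_def)
      then have "B (T' x - t x) x = 0" by (simp add: sy)
      then show "B (t x) x = 0" using T'(3) by (simp add: bilinear_lsub[OF bl])
    qed
  qed
qed

end
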